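(* Let $\alpha\in\mathbb{C}$ and let $r_1,r_2$ be positive real numbers with $0<r_1<2r_2-r_1$. Put $B_{r_1,r_2}=\{(z,w)\in\mathbb{C}^2 : |z|<2r_1,\ |2w-z-\alpha|<2r_2\}$. Let $g(z,w)$ be holomorphic on an open subset of $\mathbb{C}^2$ containing $B_{r_1,r_2}$, and set $f(z,w)=\frac{g(z,w)}{2w-z-\alpha}$. For $j=0,1,2,\dots$ let \[ I_j=\frac{1}{(2\pi\sqrt{-1})^2}\oint_{C_0}\frac{dz}{z}\oint_{C_{\frac{z+\alpha}{2}}}dw\, f(z,w)\left(\frac{w-z}{z}\right)^j . \] Then there is a constant $r>0$ such that for all $\varepsilon\in\mathbb{C}$ with $|\varepsilon|<r$, \[ \sum_{j=0}^{\infty} I_j\,\varepsilon^j=\frac{1}{2+\varepsilon}\cdot\frac{1}{2\pi\sqrt{-1}}\oint_{C_{\frac{1+\varepsilon}{2+\varepsilon}\alpha}}dw\,\frac{g\left(\frac{\varepsilon}{1+\varepsilon}w,\,w\right)}{w-\frac{1+\varepsilon}{2+\varepsilon}\alpha}. \] In particular, the generating function $F(\varepsilon)=\sum_{j\ge0}I_j\varepsilon^j$ is holomorphic at $\varepsilon=0$.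
   Context: $\frac{1}{2\pi\sqrt{-1}}\oint_{C_0}dz$ denotes taking the residue at $z=0$, realized as the contour integral over $z(t)=r_1e^{2\pi\sqrt{-1}t}$, $0\le t\le 1$; $\frac{1}{2\pi\sqrt{-1}}\oint_{C_{\frac{z+\alpha}{2}}}dw$ denotes taking the residue at $w=\frac{z+\alpha}{2}$, realized as the contour integral over $w(t)=\frac{z+\alpha}{2}+r_2e^{2\pi\sqrt{-1}t}$, $0\le t\le1$; and $\frac{1}{2\pi\sqrt{-1}}\oint_{C_{\beta}}dw$ denotes taking the residue at $w=\beta$. Iterated residue integrals are performed from left to right, i.e. the $z$-integration is done first. *)

theory Defs
  imports "HOL-Complex_Analysis.Complex_Analysis"
begin

definition holomorphic2_on :: "(complex \<times> complex \<Rightarrow> complex) \<Rightarrow> (complex \<times> complex) set \<Rightarrow> bool" where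
  "holomorphic2_on g U \<longleftrightarrow>
     (\<forall>p\<in>U. \<exists>a b. (g has_derivative (\<lambda>(h, k). a * h + b * k)) (at p within U))"

definition Bset :: "complex \<Rightarrow> real \<Rightarrow> real \<Rightarrow> (complex \<times> complex) set" where
  "Bset \<alpha> r1 r2 = {(z, w). cmod z < 2 * r1 \<and> cmod (2 * w - z - \<alpha>) < 2 * r2}"

definition Icoef :: "(complex \<times> complex \<Rightarrow> complex) \<Rightarrow> complex \<Rightarrow> nat \<Rightarrow> complex" where
  "Icoef g \<alpha> j = residue (\<lambda>z. (1 / z) *
       residue (\<lambda>w. g (z, w) / (2 * w - z - \<alpha>) * ((w - z) / z) ^ j) ((z + \<alpha>) / 2)) 0"

end

theory Submission
  imports Defs
begin

lemma holo_comp: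
  assumes g: "holomorphic2_on g U" and U: "open U"
  shows "(\<lambda>x. g (c1*x+d1, c2*x+d2)) holomorphic_on {x. (c1*x+d1, c2*x+d2) \<in> U}"
proof -
  have "(\<lambda>x. g (c1*x+d1, c2*x+d2)) field_differentiable at x" if x: "(c1*x+d1, c2*x+d2) \<in> U" for x
  proof -
    obtain a b where ab: "(g has_derivative (\<lambda>(h, k). a * h + b * k)) (at (c1*x+d1, c2*x+d2) within U)"
      using g x unfolding holomorphic2_on_def by blast
    have ab': "(g has_derivative (\<lambda>(h, k). a * h + b * k)) (at (c1*x+d1, c2*x+d2))"
      using ab unfolding at_within_open[OF x U] .
    have p: "((\<lambda>x. (c1*x+d1, c2*x+d2)) has_derivative (\<lambda>x. (c1*x, c2*x))) (at x)"
      by (auto intro!: derivative_eq_intros)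
    have "((g \<circ> (\<lambda>x. (c1*x+d1, c2*x+d2))) has_derivative ((\<lambda>(h, k). a * h + b * k) \<circ> (\<lambda>x. (c1*x, c2*x)))) (at x)"
      by (rule diff_chain_at[OF p ab'])
    moreover have "((\<lambda>(h, k). a * h + b * k) \<circ> (\<lambda>x. (c1*x, c2*x))) = (*) (a*c1+b*c2)"
      by (auto simp: fun_eq_iff algebra_simps)
    ultimately have "((g \<circ> (\<lambda>x. (c1*x+d1, c2*x+d2))) has_derivative (*) (a*c1+b*c2)) (at x)"
      by simp
    then have "((\<lambda>x. g (c1*x+d1, c2*x+d2)) has_field_derivative (a*c1+b*c2)) (at x)"
      unfolding has_field_derivative_def o_def .
    then show ?thesis using field_differentiable_def by blast
  qed
  then show ?thesis unfolding holomorphic_on_def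
    using field_differentiable_at_within by blast
qed

lemma open_pre:
  assumes U: "open U" shows "open {x::complex. (c1*x+d1, c2*x+d2) \<in> U}"
proof -
  have "{x::complex. (c1*x+d1, c2*x+d2) \<in> U} = (\<lambda>x. (c1*x+d1, c2*x+d2)) -` U" by auto
  also have "open \<dots>" by (rule continuous_open_vimage[OF U]) (auto intro!: continuous_intros)
  finally show ?thesis .
qed

lemma inner_res:
  assumes g: "holomorphic2_on g U" and U: "open U" and zU: "(z, (z+\<alpha>)/2) \<in> U"
  shows "residue (\<lambda>w. g (z, w) / (2 * w - z - \<alpha>) * ((w - z) / z) ^ j) ((z + \<alpha>) / 2)
         = g (z, (z+\<alpha>)/2) / 2 * (((z+\<alpha>)/2 - z)/z)^j"
proof -
  define c where "c = (z+\<alpha>)/2"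
  define S where "S = {w. (0*w+z, 1*w+0) \<in> U}"
  define F where "F = (\<lambda>w. g (z, w) / 2 * ((w - z) / z) ^ j)"
  have "open S" unfolding S_def by (rule open_pre[OF U])
  have "c \<in> S" using zU by (simp add: S_def c_def)
  have "(\<lambda>w. g (0*w+z, 1*w+0)) holomorphic_on S" unfolding S_def by (rule holo_comp[OF g U])
  then have "F holomorphic_on S" unfolding F_def by (auto intro!: holomorphic_intros)
  have eq: "(\<lambda>w. g (z, w) / (2 * w - z - \<alpha>) * ((w - z) / z) ^ j) = (\<lambda>w. F w / (w - c))"
  proof
    fix w
    have "2 * w - z - \<alpha> = 2 * (w - c)" by (simp add: c_def algebra_simps)
    then show "g (z, w) / (2 * w - z - \<alpha>) * ((w - z) / z) ^ j = F w / (w - c)"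
      by (simp add: F_def)
  qed
  show ?thesis unfolding eq c_def[symmetric]
    using residue_simple[OF \<open>open S\<close> \<open>c \<in> S\<close> \<open>F holomorphic_on S\<close>] by (simp add: F_def)
qed

lemma w0_id:
  fixes e \<alpha> :: complex
  assumes ne1: "1 + e \<noteq> 0" and ne2: "2 + e \<noteq> 0"
  shows "(1 + e) / (2 + e) * \<alpha> = (e*\<alpha>/(2+e)+\<alpha>)/2"
proof -
  have a: "(2+e) * ((1+e)/(2+e)*\<alpha>) = (1+e)*\<alpha>" using ne2 by simp
  have "(2+e) * ((e*\<alpha>/(2+e)+\<alpha>)/2) = ((2+e)*(e*\<alpha>/(2+e)) + (2+e)*\<alpha>)/2"
    by (simp add: distrib_left)
  also have "\<dots> = (e*\<alpha> + (2+e)*\<alpha>)/2" using ne2 by simp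
  also have "\<dots> = (1+e)*\<alpha>" by (simp add: field_simps)
  finally have b: "(2+e) * ((e*\<alpha>/(2+e)+\<alpha>)/2) = (1+e)*\<alpha>" .
  show ?thesis using a b ne2 by (metis mult_left_cancel)
qed

lemma fexp_t: fixes e z H Q :: complex
  shows "e ^ j * ((1/z) * (H / 2 * Q ^ j)) = H / (2*z) * (e * Q) ^ j"
  by (simp add: power_mult_distrib mult_ac)

lemma A_t: fixes e z \<alpha> :: complex
  assumes "cmod z = r1" "r1 > 0"
  shows "cmod (e * (((z+\<alpha>)/2 - z)/z)) = cmod e * cmod (\<alpha> - z) / (2 * r1)"
proof -
  have nz: "z \<noteq> 0" using assms by auto
  have "e * (((z+\<alpha>)/2 - z)/z) = e * (\<alpha> - z) / (2*z)" using nz by (simp add: field_simps)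
  then have "cmod (e * (((z+\<alpha>)/2 - z)/z)) = cmod e * cmod (\<alpha> - z) / (2 * cmod z)"
    by (simp add: norm_mult norm_divide)
  then show ?thesis using assms(1) by simp
qed

lemma L_t: fixes e z \<alpha> H :: complex
  assumes nz: "z \<noteq> 0" and ne2: "2 + e \<noteq> 0"
  shows "H / (2*z) * (1 / (1 - e * (((z+\<alpha>)/2 - z)/z))) = 1/(2+e) * (H / (z - e*\<alpha>/(2+e)))"
proof -
  have "2*z*(1 - e * (((z+\<alpha>)/2 - z)/z)) = 2*z - e*(\<alpha> - z)"
    using nz by (simp add: field_simps)
  also have "\<dots> = (2+e)*(z - e*\<alpha>/(2+e))"
    using ne2 by (simp add: field_simps)
  finally have k: "2*z*(1 - e * (((z+\<alpha>)/2 - z)/z)) = (2+e)*(z - e*\<alpha>/(2+e))" .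
  have "H / (2*z) * (1 / (1 - e * (((z+\<alpha>)/2 - z)/z))) = H / (2*z*(1 - e * (((z+\<alpha>)/2 - z)/z)))"
    by simp
  also have "\<dots> = H / ((2+e)*(z - e*\<alpha>/(2+e)))" unfolding k ..
  also have "\<dots> = 1/(2+e) * (H / (z - e*\<alpha>/(2+e)))" by simp
  finally show ?thesis .
qed

theorem lemma1:
  fixes \<alpha> :: complex and r1 r2 :: real and g :: "complex \<times> complex \<Rightarrow> complex"
    and U :: "(complex \<times> complex) set"
  assumes "0 < r1" "0 < r2" "r1 < 2 * r2 - r1"
    and "open U" "Bset \<alpha> r1 r2 \<subseteq> U" "holomorphic2_on g U"
  shows "\<exists>r>0.
     (\<forall>\<epsilon>. cmod \<epsilon> < r \<longrightarrow>
        (\<lambda>j. Icoef g \<alpha> j * \<epsilon> ^ j) sums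
          (1 / (2 + \<epsilon>) *
            residue (\<lambda>w. g (\<epsilon> / (1 + \<epsilon>) * w, w) / (w - (1 + \<epsilon>) / (2 + \<epsilon>) * \<alpha>))
                    ((1 + \<epsilon>) / (2 + \<epsilon>) * \<alpha>)))
     \<and> (\<lambda>\<epsilon>. \<Sum>j. Icoef g \<alpha> j * \<epsilon> ^ j) analytic_on {0}"
proof -
  note r1 = \<open>0 < r1\<close> and U = \<open>open U\<close> and BU = \<open>Bset \<alpha> r1 r2 \<subseteq> U\<close> and g = \<open>holomorphic2_on g U\<close>
  define s where "s = ball (0::complex) (2*r1)"
  define h where "h = (\<lambda>z. g (z, (z+\<alpha>)/2))"
  have sU: "(z, (z+\<alpha>)/2) \<in> U" if "z \<in> s" for z
  proof -
    have eq0: "2 * ((z+\<alpha>)/2) - z - \<alpha> = 0" by (simp add: field_simps)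
    have c: "cmod (2 * ((z+\<alpha>)/2) - z - \<alpha>) < 2 * r2" using \<open>0 < r2\<close> by (subst eq0) simp
    have "cmod z < 2 * r1" using that by (simp add: s_def)
    then have "(z, (z+\<alpha>)/2) \<in> Bset \<alpha> r1 r2" using c unfolding Bset_def by blast
    then show ?thesis using BU by blast
  qed
  have hholo: "h holomorphic_on s"
  proof -
    have H1: "(\<lambda>x. g (1*x+0, 1/2*x+\<alpha>/2)) holomorphic_on {x. (1*x+0, 1/2*x+\<alpha>/2) \<in> U}"
      by (rule holo_comp[OF g U])
    have H2: "(\<lambda>x. g (1*x+0, 1/2*x+\<alpha>/2)) = h"
      by (auto simp: fun_eq_iff h_def add_divide_distrib)
    have H3: "s \<subseteq> {x. (1*x+0, 1/2*x+\<alpha>/2) \<in> U}"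
    proof
      fix x assume "x \<in> s"
      have "(1*x+0, 1/2*x+\<alpha>/2) = (x, (x+\<alpha>)/2)" by (simp add: add_divide_distrib)
      then show "x \<in> {x. (1*x+0, 1/2*x+\<alpha>/2) \<in> U}" using sU[OF \<open>x \<in> s\<close>] by (simp add: add_divide_distrib)
    qed
    show ?thesis using holomorphic_on_subset[OF H1 H3] unfolding H2 .
  qed
  define q where "q = (\<lambda>z. ((z+\<alpha>)/2 - z)/z)"
  define f where "f = (\<lambda>j z. (1/z) * (h z / 2 * q z ^ j))"
  have Ieq: "Icoef g \<alpha> j = residue (f j) 0" for j
    unfolding Icoef_def
  proof (rule residue_cong)
    have "eventually (\<lambda>z. z \<in> s) (at 0)"
      unfolding s_def using r1 by (intro eventually_at_in_open') auto
    then show "\<forall>\<^sub>F z in at 0. 1 / z * residue (\<lambda>w. g (z, w) / (2 * w - z - \<alpha>) * ((w - z) / z) ^ j) ((z + \<alpha>) / 2) = f j z"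
    proof eventually_elim
      case (elim z)
      show ?case unfolding inner_res[OF g U sU[OF elim]] by (simp add: f_def h_def q_def)
    qed
  qed simp
  have fholo: "f j holomorphic_on (s - {0})" for j
  proof -
    have "h holomorphic_on (s - {0})" using holomorphic_on_subset[OF hholo Diff_subset] .
    then show ?thesis unfolding f_def q_def by (auto intro!: holomorphic_intros)
  qed
  have fint: "(f j has_contour_integral 2 * pi * \<i> * Icoef g \<alpha> j) (circlepath 0 r1)" for j
    unfolding Ieq
    by (rule base_residue[OF _ _ r1 fholo]) (use r1 in \<open>auto simp: s_def\<close>)

  obtain H where H: "H > 0" "\<And>z. z \<in> sphere 0 r1 \<Longrightarrow> norm (h z) \<le> H"
  proof -
    have "compact (h ` sphere 0 r1)"
      by (rule compact_continuous_image[OF continuous_on_subset[OF holomorphic_on_imp_continuous_on[OF hholo]]])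
         (use r1 in \<open>auto simp: s_def\<close>)
    then have "bounded (h ` sphere 0 r1)" by (rule compact_imp_bounded)
    then show ?thesis using that unfolding bounded_pos by blast
  qed
  define r where "r = min (1/2) (r1 / (cmod \<alpha> + r1))"
  have rpos: "r > 0" using r1 by (simp add: r_def add_nonneg_pos)
  have key: "(\<lambda>j. Icoef g \<alpha> j * e ^ j) sums (h (e*\<alpha>/(2+e)) / (2+e))
     \<and> 1 / (2 + e) * residue (\<lambda>w. g (e / (1 + e) * w, w) / (w - (1 + e) / (2 + e) * \<alpha>))
                    ((1 + e) / (2 + e) * \<alpha>) = h (e*\<alpha>/(2+e)) / (2+e)
     \<and> e*\<alpha>/(2+e) \<in> s \<and> 2 + e \<noteq> 0"
    if e: "cmod e < r" for e
  proof -
    have e12: "cmod e < 1/2" using e by (simp add: r_def)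
    have pos: "cmod \<alpha> + r1 > 0" using r1 by (simp add: add_nonneg_pos)
    have "cmod e < r1/(cmod \<alpha> + r1)" using e by (simp add: r_def)
    then have er: "cmod e * (cmod \<alpha> + r1) < r1" using pos by (simp add: pos_less_divide_eq)
    have n2e: "cmod (2 + e) \<ge> 1"
      using norm_diff_ineq[of 2 e] e12 by simp
    have "1 - cmod e \<le> cmod (1 + e)" using norm_diff_ineq[of 1 e] by simp
    then have n1e: "cmod (1 + e) > 0" using e12 by linarith
    have ne2: "2 + e \<noteq> 0" using n2e by auto
    have ne1: "1 + e \<noteq> 0" using n1e by auto
    define z0 where "z0 = e*\<alpha>/(2+e)"
    have z0r1: "cmod z0 < r1"
    proof -
      have "cmod z0 = cmod e * cmod \<alpha> / cmod (2+e)" by (simp add: z0_def norm_mult norm_divide)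
      also have "\<dots> \<le> cmod e * cmod \<alpha> / 1"
        by (rule divide_left_mono) (use n2e in auto)
      also have "\<dots> = cmod e * cmod \<alpha>" by simp
      also have "\<dots> \<le> cmod e * (cmod \<alpha> + r1)" using r1 by (simp add: mult_left_mono)
      also have "\<dots> < r1" by (rule er)
      finally show ?thesis .
    qed
    then have z0s: "z0 \<in> s" using r1 by (simp add: s_def)
    have eqb: "cmod (e * q z) \<le> 1/2" if z: "z \<in> sphere 0 r1" for z
    proof -
      have nz: "cmod z = r1" using z by simp
      have A: "cmod (e * q z) = cmod e * cmod (\<alpha> - z) / (2 * r1)"
        unfolding q_def by (rule A_t[OF nz r1])
      have "cmod e * cmod (\<alpha> - z) \<le> cmod e * (cmod \<alpha> + r1)"
        using norm_triangle_ineq4[of \<alpha> z] nz by (simp add: mult_left_mono)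
      then have "cmod e * cmod (\<alpha> - z) / (2 * r1) \<le> 1/2"
        using er r1 by (simp add: divide_le_eq)
      then show ?thesis using A by simp
    qed
    have fexp: "e ^ j * f j z = h z / (2*z) * (e * q z) ^ j" if "z \<noteq> 0" for z j
      unfolding f_def by (rule fexp_t)
    define T where "T = (\<lambda>n z. \<Sum>i<n. e ^ i * f i z)"
    define L where "L = (\<lambda>z. suminf (\<lambda>i. e ^ i * f i z))"
    have ul: "uniform_limit (sphere 0 r1) T L sequentially"
      unfolding T_def L_def
    proof (rule Weierstrass_m_test)
      show "summable (\<lambda>n. H / (2*r1) * (1/2)^n)"
        by (intro summable_mult summable_geometric) simp
      fix n z assume z: "z \<in> sphere (0::complex) r1"
      then have nz: "z \<noteq> 0" "cmod z = r1" using r1 by auto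
      have "norm (e ^ n * f n z) = norm (h z) / (2 * r1) * cmod (e * q z) ^ n"
        using nz by (simp add: fexp norm_mult norm_divide norm_power)
      also have "\<dots> \<le> H / (2*r1) * (1/2)^n"
        by (intro mult_mono divide_right_mono power_mono eqb z H(2)) (use r1 H in auto)
      finally show "norm (e ^ n * f n z) \<le> H / (2*r1) * (1/2)^n" .
    qed
    have Tint: "(T n has_contour_integral 2 * pi * \<i> * (\<Sum>i<n. Icoef g \<alpha> i * e ^ i)) (circlepath 0 r1)" for n
    proof -
      have "(T n has_contour_integral (\<Sum>i<n. e ^ i * (2 * pi * \<i> * Icoef g \<alpha> i))) (circlepath 0 r1)"
        unfolding T_def by (intro has_contour_integral_sum has_contour_integral_lmul fint) auto
      moreover have "(\<Sum>i<n. e ^ i * (2 * pi * \<i> * Icoef g \<alpha> i)) = 2 * pi * \<i> * (\<Sum>i<n. Icoef g \<alpha> i * e ^ i)"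
        by (simp add: sum_distrib_left mult_ac)
      ultimately show ?thesis by simp
    qed
    have lim: "((\<lambda>n. contour_integral (circlepath 0 r1) (T n)) \<longlonglongrightarrow> contour_integral (circlepath 0 r1) L)"
    proof (rule contour_integral_uniform_limit_circlepath(2)[OF _ ul _ r1])
      show "\<forall>\<^sub>F n in sequentially. T n contour_integrable_on circlepath 0 r1"
        by (rule always_eventually) (use has_contour_integral_integrable[OF Tint] in blast)
    qed simp
    have Lval: "L z = 1/(2+e) * (h z / (z - z0))" if z: "z \<in> sphere 0 r1" for z
    proof -
      have nz: "z \<noteq> 0" using z r1 by auto
      have lt1: "norm (e * q z) < 1" using eqb[OF z] by simp
      have "L z = suminf (\<lambda>i. h z / (2*z) * (e * q z) ^ i)"
        unfolding L_def using nz by (simp add: fexp)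
      also have "\<dots> = h z / (2*z) * (1 / (1 - e * q z))"
        unfolding suminf_mult[OF summable_geometric[OF lt1]] suminf_geometric[OF lt1] ..
      also have "\<dots> = 1/(2+e) * (h z / (z - z0))"
      proof -
        have n1: "1 - e * q z \<noteq> 0" using lt1 by auto
        show ?thesis
          unfolding q_def z0_def by (rule L_t[OF nz ne2])
      qed
      finally show ?thesis .
    qed
    have "((\<lambda>u. h u / (u - z0)) has_contour_integral (2 * of_real pi * \<i> * h z0)) (circlepath 0 r1)"
      by (rule Cauchy_integral_circlepath_simple[OF holomorphic_on_subset[OF hholo]])
         (use z0r1 r1 in \<open>auto simp: s_def\<close>)
    then have "((\<lambda>u. 1/(2+e) * (h u / (u - z0))) has_contour_integral (1/(2+e) * (2 * of_real pi * \<i> * h z0))) (circlepath 0 r1)"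
      by (rule has_contour_integral_lmul)
    then have "(L has_contour_integral (1/(2+e) * (2 * of_real pi * \<i> * h z0))) (circlepath 0 r1)"
      by (rule has_contour_integral_eq) (use Lval r1 in auto)
    then have CL: "contour_integral (circlepath 0 r1) L = 2 * pi * \<i> * (h z0 / (2+e))"
      by (simp add: contour_integral_unique)
    have "(\<lambda>n. 2 * pi * \<i> * (\<Sum>i<n. Icoef g \<alpha> i * e ^ i)) \<longlonglongrightarrow> 2 * pi * \<i> * (h z0 / (2+e))"
      using lim unfolding CL using contour_integral_unique[OF Tint] by simp
    then have "(\<lambda>n. (\<Sum>i<n. Icoef g \<alpha> i * e ^ i)) \<longlonglongrightarrow> h z0 / (2+e)"
      using tendsto_mult_left[of _ _ _ "1/(2 * pi * \<i>)"] by fastforce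
    then have S1: "(\<lambda>j. Icoef g \<alpha> j * e ^ j) sums (h z0 / (2+e))"
      by (simp add: sums_def)
    define w0 where "w0 = (1 + e) / (2 + e) * \<alpha>"
    define S where "S = {w. (e/(1+e)*w+0, 1*w+0) \<in> U}"
    have "open S" unfolding S_def by (rule open_pre[OF U])
    have w0e1: "e/(1+e)*w0 = z0"
      unfolding w0_def z0_def using ne1 ne2 by simp
    have w0e2: "w0 = (z0+\<alpha>)/2"
      unfolding w0_def z0_def by (rule w0_id[OF ne1 ne2])
    have "(z0, w0) \<in> U" using sU[OF z0s] by (simp only: w0e2[symmetric])
    then have "(e/(1+e)*w0, w0) \<in> U" unfolding w0e1 .
    then have "w0 \<in> S" by (simp add: S_def)
    have "(\<lambda>w. g (e/(1+e)*w+0, 1*w+0)) holomorphic_on S" unfolding S_def by (rule holo_comp[OF g U])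
    then have "(\<lambda>w. g (e/(1+e)*w, w)) holomorphic_on S" by simp
    from residue_simple[OF \<open>open S\<close> \<open>w0 \<in> S\<close> this]
    have R: "residue (\<lambda>w. g (e / (1 + e) * w, w) / (w - w0)) w0 = g (e/(1+e)*w0, w0)" .
    have Rg: "g (e/(1+e)*w0, w0) = h z0" unfolding w0e1 h_def by (simp only: w0e2[symmetric])
    show ?thesis unfolding z0_def[symmetric] w0_def[symmetric]
    proof (intro conjI S1 z0s ne2)
      show "1 / (2 + e) * residue (\<lambda>w. g (e / (1 + e) * w, w) / (w - w0)) w0 = h z0 / (2 + e)"
        unfolding R Rg by simp
    qed
  qed
  have K: "e*\<alpha>/(2+e) \<in> s" "2 + e \<noteq> 0" if "cmod e < r" for e
    using key[OF that] by blast+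
  have K2: "(\<lambda>j. Icoef g \<alpha> j * e ^ j) sums (h (e*\<alpha>/(2+e)) / (2+e))" if "cmod e < r" for e
    using key[OF that] by blast
  show ?thesis
  proof (intro exI[of _ r] conjI rpos allI impI)
    fix e :: complex assume "cmod e < r"
    from key[OF this] have A: "(\<lambda>j. Icoef g \<alpha> j * e ^ j) sums (h (e*\<alpha>/(2+e)) / (2+e))"
      and B: "1 / (2 + e) * residue (\<lambda>w. g (e / (1 + e) * w, w) / (w - (1 + e) / (2 + e) * \<alpha>))
                    ((1 + e) / (2 + e) * \<alpha>) = h (e*\<alpha>/(2+e)) / (2+e)"
      by blast+
    show "(\<lambda>j. Icoef g \<alpha> j * e ^ j) sums
          (1 / (2 + e) * residue (\<lambda>w. g (e / (1 + e) * w, w) / (w - (1 + e) / (2 + e) * \<alpha>))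
                    ((1 + e) / (2 + e) * \<alpha>))"
      unfolding B by (rule A)
  next
    have "(\<lambda>e. e*\<alpha>/(2+e)) holomorphic_on ball 0 r"
      by (rule holomorphic_on_divide) (auto intro!: holomorphic_intros dest: K(2))
    then have "(h \<circ> (\<lambda>e. e*\<alpha>/(2+e))) holomorphic_on ball 0 r"
      by (rule holomorphic_on_compose_gen[OF _ hholo]) (auto dest: K(1))
    then have "(\<lambda>e. h (e*\<alpha>/(2+e)) / (2+e)) holomorphic_on ball 0 r"
      by (intro holomorphic_on_divide) (auto simp: o_def intro!: holomorphic_intros dest: K(2))
    then have "(\<lambda>e. \<Sum>j. Icoef g \<alpha> j * e ^ j) holomorphic_on ball 0 r"
    proof (rule holomorphic_transform)
      fix x :: complex assume "x \<in> ball 0 r"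
      then have "cmod x < r" by simp
      show "h (x*\<alpha>/(2+x)) / (2+x) = (\<Sum>j. Icoef g \<alpha> j * x ^ j)"
        by (rule sums_unique[OF K2[OF \<open>cmod x < r\<close>]])
    qed
    then show "(\<lambda>e. \<Sum>j. Icoef g \<alpha> j * e ^ j) analytic_on {0}"
      unfolding analytic_on_def using rpos by auto
  qed
qed

end
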